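(* Let $n\geq 4$ and let $\gamma: WT_n\to\mathrm{GL}_{n+1}(\mathbb{C})$ be a homogeneous $3$-local representation of the welded twin group $WT_n$. Then $\gamma$ is unfaithful.
   Context: The virtual twin group $VT_n$ has generators $s_1,\dots,s_{n-1},\rho_1,\dots,\rho_{n-1}$ and defining relations: $s_i^2=1$ ($1\le i\le n-1$); $s_is_j=s_js_i$ ($|i-j|\ge2$); $\rho_i\rho_{i+1}\rho_i=\rho_{i+1}\rho_i\rho_{i+1}$ ($1\le i\le n-2$); $\rho_i\rho_j=\rho_j\rho_i$ ($|i-j|\ge2$); $\rho_i^2=1$; $s_i\rho_j=\rho_js_i$ ($|i-j|\ge2$); $\rho_i\rho_{i+1}s_i=s_{i+1}\rho_i\rho_{i+1}$ ($1\le i\le n-2$). The welded twin group $WT_n$ is the quotient of $VT_n$ by the additional relations $\rho_is_{i+1}s_i=s_{i+1}s_i\rho_{i+1}$ ($1\le i\le n-2$). A representation $\gamma:WT_n\to\mathrm{GL}_{n+1}(\mathbb{C})$ is homogeneous $3$-local if there are fixed $M,N\in\mathrm{GL}_3(\mathbb{C})$ with $\gamma(s_i)=\mathrm{diag}(I_{i-1},M,I_{n-i-1})$ and $\gamma(\rho_i)=\mathrm{diag}(I_{i-1},N,I_{n-i-1})$ for all $i$ (block-diagonal, $I_r$ the $r\times r$ identity). Unfaithful means not injective. *)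

theory Defs
  imports Complex_Main "Jordan_Normal_Form.Matrix"
begin

text \<open>Generators of the virtual/welded twin group: S i stands for s_i, R i for rho_i
  (indices 1 .. n-1).  Since every generator is an involution in WT_n, the group WT_n is
  presented as a monoid on these generators; words are lists of generators.\<close>

datatype gen = S nat | R nat

definition gen_idx :: "gen \<Rightarrow> nat" where
  "gen_idx g = (case g of S i \<Rightarrow> i | R i \<Rightarrow> i)"

definition valid_word :: "nat \<Rightarrow> gen list \<Rightarrow> bool" where
  "valid_word n w \<longleftrightarrow> (\<forall>g\<in>set w. 1 \<le> gen_idx g \<and> gen_idx g \<le> n - 1)"

definition far :: "nat \<Rightarrow> nat \<Rightarrow> bool" where
  "far i j \<longleftrightarrow> i + 2 \<le> j \<or> j + 2 \<le> i"

inductive wt_rel :: "nat \<Rightarrow> gen list \<Rightarrow> gen list \<Rightarrow> bool" for n where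
  s_inv: "\<lbrakk>1 \<le> i; i \<le> n - 1\<rbrakk> \<Longrightarrow> wt_rel n [S i, S i] []"
| s_comm: "\<lbrakk>1 \<le> i; i \<le> n - 1; 1 \<le> j; j \<le> n - 1; far i j\<rbrakk>
     \<Longrightarrow> wt_rel n [S i, S j] [S j, S i]"
| r_braid: "\<lbrakk>1 \<le> i; i \<le> n - 2\<rbrakk>
     \<Longrightarrow> wt_rel n [R i, R (i+1), R i] [R (i+1), R i, R (i+1)]"
| r_comm: "\<lbrakk>1 \<le> i; i \<le> n - 1; 1 \<le> j; j \<le> n - 1; far i j\<rbrakk>
     \<Longrightarrow> wt_rel n [R i, R j] [R j, R i]"
| r_inv: "\<lbrakk>1 \<le> i; i \<le> n - 1\<rbrakk> \<Longrightarrow> wt_rel n [R i, R i] []"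
| sr_comm: "\<lbrakk>1 \<le> i; i \<le> n - 1; 1 \<le> j; j \<le> n - 1; far i j\<rbrakk>
     \<Longrightarrow> wt_rel n [S i, R j] [R j, S i]"
| mixed: "\<lbrakk>1 \<le> i; i \<le> n - 2\<rbrakk>
     \<Longrightarrow> wt_rel n [R i, R (i+1), S i] [S (i+1), R i, R (i+1)]"
| welded: "\<lbrakk>1 \<le> i; i \<le> n - 2\<rbrakk>
     \<Longrightarrow> wt_rel n [R i, S (i+1), S i] [S (i+1), S i, R (i+1)]"

inductive wt_eq :: "nat \<Rightarrow> gen list \<Rightarrow> gen list \<Rightarrow> bool" for n where
  refl: "wt_eq n w w"
| sym: "wt_eq n u v \<Longrightarrow> wt_eq n v u"
| trans: "wt_eq n u v \<Longrightarrow> wt_eq n v w \<Longrightarrow> wt_eq n u w"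
| rel: "wt_rel n a b \<Longrightarrow> wt_eq n (u @ a @ v) (u @ b @ v)"

text \<open>diag(I_{i-1}, A, I_{n-i-1}) as an (n+1)x(n+1) matrix; rows/columns are 0-based,
  so the 3x3 block occupies rows and columns i-1, i, i+1.\<close>
definition block_at :: "nat \<Rightarrow> nat \<Rightarrow> complex mat \<Rightarrow> complex mat" where
  "block_at n i A = mat (n+1) (n+1) (\<lambda>(r,c).
      if i - 1 \<le> r \<and> r \<le> i + 1 \<and> i - 1 \<le> c \<and> c \<le> i + 1
      then A $$ (r + 1 - i, c + 1 - i)
      else if r = c then 1 else 0)"

definition gen_mat :: "nat \<Rightarrow> complex mat \<Rightarrow> complex mat \<Rightarrow> gen \<Rightarrow> complex mat" where
  "gen_mat n M N g = (case g of S i \<Rightarrow> block_at n i M | R i \<Rightarrow> block_at n i N)"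

definition word_mat :: "nat \<Rightarrow> complex mat \<Rightarrow> complex mat \<Rightarrow> gen list \<Rightarrow> complex mat" where
  "word_mat n M N w = foldr (\<lambda>g A. gen_mat n M N g * A) w (1\<^sub>m (n+1))"

definition is_hom_3local_rep :: "nat \<Rightarrow> complex mat \<Rightarrow> complex mat \<Rightarrow> bool" where
  "is_hom_3local_rep n M N \<longleftrightarrow>
     M \<in> carrier_mat 3 3 \<and> N \<in> carrier_mat 3 3 \<and> invertible_mat M \<and> invertible_mat N \<and>
     (\<forall>a b. wt_rel n a b \<longrightarrow> word_mat n M N a = word_mat n M N b)"

definition unfaithful :: "nat \<Rightarrow> complex mat \<Rightarrow> complex mat \<Rightarrow> bool" where
  "unfaithful n M N \<longleftrightarrow>
     (\<exists>u v. valid_word n u \<and> valid_word n v \<and> \<not> wt_eq n u v \<and>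
            word_mat n M N u = word_mat n M N v)"

end

theory Submission
  imports Defs
begin


definition emb :: "nat \<Rightarrow> complex mat \<Rightarrow> complex mat" where
  "emb n X = four_block_mat X (0\<^sub>m 5 (n-4)) (0\<^sub>m (n-4) 5) (1\<^sub>m (n-4))"

lemma emb_mult:
  assumes "X \<in> carrier_mat 5 5" "Y \<in> carrier_mat 5 5"
  shows "emb n X * emb n Y = emb n (X * Y)"
  unfolding emb_def
  by (subst mult_four_block_mat[of _ 5 5 _ "n-4" _ "n-4"], insert assms, auto)

lemma block_emb:
  assumes "n \<ge> 4" "1 \<le> i" "i \<le> 3"
  shows "block_at n i A = emb n (block_at 4 i A)"
  unfolding emb_def
  apply (rule eq_matI)
  using assms by (auto simp: block_at_def)

lemma one_emb:
  assumes "n \<ge> 4"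
  shows "1\<^sub>m (n+1) = emb n (1\<^sub>m 5)"
  unfolding emb_def
  apply (rule eq_matI)
  using assms by auto

lemma emb_inj:
  assumes "X \<in> carrier_mat 5 5" "Y \<in> carrier_mat 5 5" "emb n X = emb n Y"
  shows "X = Y"
proof (rule eq_matI)
  fix i j assume ij: "i < dim_row Y" "j < dim_col Y"
  have "emb n X $$ (i,j) = emb n Y $$ (i,j)" using assms(3) by simp
  then show "X $$ (i,j) = Y $$ (i,j)" using ij assms(1,2) unfolding emb_def by auto
qed (use assms in auto)

lemma word_mat_carrier: "word_mat n M N w \<in> carrier_mat (n+1) (n+1)"
  unfolding word_mat_def
  by (induction w) (auto simp: gen_mat_def block_at_def split: gen.splits)

lemma wm_dim[simp]: "dim_row (word_mat n M N w) = n+1" "dim_col (word_mat n M N w) = n+1"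
  using word_mat_carrier[of n M N w] by auto

definition idx_ok :: "gen list \<Rightarrow> bool" where
  "idx_ok w \<longleftrightarrow> (\<forall>g\<in>set w. 1 \<le> gen_idx g \<and> gen_idx g \<le> 3)"

lemma word_emb:
  assumes "n \<ge> 4" "idx_ok w"
  shows "word_mat n M N w = emb n (word_mat 4 M N w)"
  using assms(2)
proof (induction w)
  case Nil
  then show ?case using one_emb[OF assms(1)] by (simp add: word_mat_def)
next
  case (Cons g w)
  have ih: "word_mat n M N w = emb n (word_mat 4 M N w)"
    using Cons by (simp add: idx_ok_def)
  have g: "1 \<le> gen_idx g" "gen_idx g \<le> 3" using Cons.prems by (auto simp: idx_ok_def)
  have gm: "gen_mat n M N g = emb n (gen_mat 4 M N g)"
    using g block_emb[OF assms(1)] by (auto simp: gen_mat_def gen_idx_def split: gen.splits)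
  have c1: "gen_mat 4 M N g \<in> carrier_mat 5 5"
    by (auto simp: gen_mat_def block_at_def split: gen.splits)
  have c2: "word_mat 4 M N w \<in> carrier_mat 5 5"
    using word_mat_carrier[of 4 M N w] by simp
  have "word_mat n M N (g # w) = gen_mat n M N g * word_mat n M N w"
    by (simp add: word_mat_def)
  also have "\<dots> = emb n (gen_mat 4 M N g * word_mat 4 M N w)"
    using gm ih emb_mult[OF c1 c2] by simp
  also have "\<dots> = emb n (word_mat 4 M N (g # w))"
    by (simp add: word_mat_def)
  finally show ?case .
qed

lemma rel_idx: "wt_rel 4 a b \<Longrightarrow> idx_ok a \<and> idx_ok b"
  by (induction rule: wt_rel.induct) (auto simp: idx_ok_def gen_idx_def)

lemma rel_lift: assumes "n \<ge> 4" "wt_rel 4 a b" shows "wt_rel n a b"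
  using assms(2)
proof (cases rule: wt_rel.cases)
  case (r_braid i) then show ?thesis using wt_rel.r_braid[of i n] assms(1) by simp
next
  case (mixed i) then show ?thesis using wt_rel.mixed[of i n] assms(1) by simp
next
  case (welded i) then show ?thesis using wt_rel.welded[of i n] assms(1) by simp
qed (use assms(1) in \<open>auto intro!: wt_rel.intros\<close>)

lemma rel4:
  assumes "n \<ge> 4" and rep: "\<And>a b. wt_rel n a b \<Longrightarrow> word_mat n M N a = word_mat n M N b"
    and r: "wt_rel 4 a b"
  shows "word_mat 4 M N a = word_mat 4 M N b"
proof -
  have "emb n (word_mat 4 M N a) = emb n (word_mat 4 M N b)"
    using rep[OF rel_lift[OF assms(1) r]] word_emb[OF assms(1)] rel_idx[OF r] by metis
  moreover have c: "\<And>w. word_mat 4 M N w \<in> carrier_mat 5 5"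
    using word_mat_carrier[of 4 M N] by simp
  ultimately show ?thesis using emb_inj[OF c c] by blast
qed

lemma word_mat_append: "word_mat n M N (u @ v) = word_mat n M N u * word_mat n M N v"
proof (induction u)
  case Nil
  then show ?case using word_mat_carrier[of n M N v] by (simp add: word_mat_def)
next
  case (Cons g u)
  have c: "gen_mat n M N g \<in> carrier_mat (n+1) (n+1)"
    by (auto simp: gen_mat_def block_at_def split: gen.splits)
  show ?case using Cons word_mat_carrier[of n M N u] word_mat_carrier[of n M N v] c
    by (simp add: word_mat_def assoc_mult_mat[of _ "n+1" "n+1" _ "n+1" _ "n+1"])
qed

lemma resp:
  assumes rep: "\<And>a b. wt_rel n a b \<Longrightarrow> word_mat n M N a = word_mat n M N b"
  shows "wt_eq n u v \<Longrightarrow> word_mat n M N u = word_mat n M N v"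
proof (induction rule: wt_eq.induct)
  case (rel a b u v)
  then show ?case using rep[OF rel] by (simp add: word_mat_append)
qed auto

definition cntS :: "gen list \<Rightarrow> nat" where
  "cntS w = length (filter (\<lambda>g. case g of S _ \<Rightarrow> True | R _ \<Rightarrow> False) w)"

lemma cntS_append: "cntS (u @ v) = cntS u + cntS v"
  by (simp add: cntS_def)

lemma rel_par: "wt_rel n a b \<Longrightarrow> even (cntS a) = even (cntS b)"
  by (induction rule: wt_rel.induct) (auto simp: cntS_def)

lemma eq_par: "wt_eq n u v \<Longrightarrow> even (cntS u) = even (cntS v)"
proof (induction rule: wt_eq.induct)
  case (rel a b u v)
  then show ?case using rel_par[OF rel] by (simp add: cntS_append)
qed auto



definition mat3 :: "complex \<Rightarrow> complex \<Rightarrow> complex \<Rightarrow> complex \<Rightarrow> complex \<Rightarrow> complex \<Rightarrow> complex \<Rightarrow> complex \<Rightarrow> complex \<Rightarrow> complex mat" where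
  "mat3 a b c d e f g h k = mat 3 3 (\<lambda>(i,j). if i = 0 then (if j = 0 then a else if j = 1 then b else c)
      else if i = 1 then (if j = 0 then d else if j = 1 then e else f)
      else (if j = 0 then g else if j = 1 then h else k))"

lemma sum5: "(\<Sum>k\<in>{0..<5::nat}. f k) = f 0 + f 1 + f 2 + f 3 + (f 4::complex)"
  by (simp add: numeral_eq_Suc atLeast0LessThan lessThan_Suc)

lemmas ent = word_mat_def gen_mat_def block_at_def scalar_prod_def sum5 mat3_def

lemma mat3_eq: assumes "M \<in> carrier_mat 3 3"
  shows "M = mat3 (M$$(0,0)) (M$$(0,1)) (M$$(0,2)) (M$$(1,0)) (M$$(1,1)) (M$$(1,2)) (M$$(2,0)) (M$$(2,1)) (M$$(2,2))"
proof (rule eq_matI)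
  fix i j assume "i < dim_row (mat3 (M$$(0,0)) (M$$(0,1)) (M$$(0,2)) (M$$(1,0)) (M$$(1,1)) (M$$(1,2)) (M$$(2,0)) (M$$(2,1)) (M$$(2,2)))"
    "j < dim_col (mat3 (M$$(0,0)) (M$$(0,1)) (M$$(0,2)) (M$$(1,0)) (M$$(1,1)) (M$$(1,2)) (M$$(2,0)) (M$$(2,1)) (M$$(2,2)))"
  then have "i < 3" "j < 3" by (auto simp: mat3_def)
  then have "i = 0 \<or> i = 1 \<or> i = 2" "j = 0 \<or> j = 1 \<or> j = 2" by auto
  then show "M $$ (i, j) = mat3 (M$$(0,0)) (M$$(0,1)) (M$$(0,2)) (M$$(1,0)) (M$$(1,1)) (M$$(1,2)) (M$$(2,0)) (M$$(2,1)) (M$$(2,2)) $$ (i, j)"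
    by (auto simp: mat3_def)
qed (use assms in \<open>auto simp: mat3_def\<close>)

lemma less5: "(i::nat) < 5 \<Longrightarrow> i = 0 \<or> i = 1 \<or> i = 2 \<or> i = 3 \<or> i = 4" by auto

lemma core:
  fixes m00 m01 m02 m10 m11 m12 m20 m21 m22 n00 n01 n02 n10 n11 n12 n20 n21 n22 :: complex
  assumes rel: "\<And>a b. wt_rel 4 a b \<Longrightarrow> word_mat 4 M N a = word_mat 4 M N b"
    and MM: "M = mat3 m00 m01 m02 m10 m11 m12 m20 m21 m22"
    and NN: "N = mat3 n00 n01 n02 n10 n11 n12 n20 n21 n22"
  shows "word_mat 4 M N [S 1, R 1, S 2, R 2] = word_mat 4 M N [R 2, S 1, R 1, R 2]"
proof -
  have E: "\<And>a b r c. wt_rel 4 a b \<Longrightarrow> word_mat 4 M N a $$ (r,c) = word_mat 4 M N b $$ (r,c)"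
    using rel by simp
  have r13: "wt_rel 4 [R 1, R 3] [R 3, R 1]" by (rule wt_rel.r_comm) (auto simp: far_def)
  have sr13: "wt_rel 4 [S 1, R 3] [R 3, S 1]" by (rule wt_rel.sr_comm) (auto simp: far_def)
  have sr31: "wt_rel 4 [S 3, R 1] [R 1, S 3]" by (rule wt_rel.sr_comm) (auto simp: far_def)
  have rinv: "wt_rel 4 [R 1, R 1] []" by (rule wt_rel.r_inv) auto
  have sinv: "wt_rel 4 [S 1, S 1] []" by (rule wt_rel.s_inv) auto
  have braid: "wt_rel 4 [R 1, R 2, R 1] [R 2, R 1, R 2]" using wt_rel.r_braid[of 1 4] by (simp add: numeral_2_eq_2)
  have mixed: "wt_rel 4 [R 1, R 2, S 1] [S 2, R 1, R 2]" using wt_rel.mixed[of 1 4] by (simp add: numeral_2_eq_2)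
  have welded: "wt_rel 4 [R 1, S 2, S 1] [S 2, S 1, R 2]" using wt_rel.welded[of 1 4] by (simp add: numeral_2_eq_2)
  note F = E[unfolded MM NN]
  have n02: "n02 = 0" using F[OF r13, of 0 4] by (simp add: ent)
  have n20: "n20 = 0" using F[OF r13, of 4 0] by (simp add: ent)
  have R13_2_1: "n21 = 0 \<or> n00 = 1" using F[OF r13, of 2 1] by (simp add: ent)
  have R13_1_2: "n12 = 0 \<or> n00 = 1" using F[OF r13, of 1 2] by (simp add: ent)
  have R13_2_3: "n01 = 0 \<or> n22 = 1" using F[OF r13, of 2 3] by (simp add: ent)
  have R13_3_2: "n10 = 0 \<or> n22 = 1" using F[OF r13, of 3 2] by (simp add: ent)
  have R13_1_3: "n12 = 0 \<or> n01 = 0" using F[OF r13, of 1 3] by (simp add: ent)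
  have R13_3_1: "n10 = 0 \<or> n21 = 0" using F[OF r13, of 3 1] by (simp add: ent)
  have SR13_2_0: "m20 = 0 \<or> n00 = 1" using F[OF sr13, of 2 0] by (simp add: ent)
  have SR13_2_1: "m21 = 0 \<or> n00 = 1" using F[OF sr13, of 2 1] by (simp add: ent)
  have SR13_0_3: "m02 = 0 \<or> n01 = 0" using F[OF sr13, of 0 3] by (simp add: ent)
  have SR13_1_3: "m12 = 0 \<or> n01 = 0" using F[OF sr13, of 1 3] by (simp add: ent)
  have SR13_2_3: "n01 = 0 \<or> m22 = 1" using F[OF sr13, of 2 3] by (simp add: ent)
  have SR13_3_0: "n10 = 0 \<or> m20 = 0" using F[OF sr13, of 3 0] by (simp add: ent)
  have SR13_3_1: "n10 = 0 \<or> m21 = 0" using F[OF sr13, of 3 1] by (simp add: ent)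
  have SR13_3_2: "n10 = 0 \<or> m22 = 1" using F[OF sr13, of 3 2] by (simp add: ent)
  have SR31_2_1: "n21 = 0 \<or> m00 = 1" using F[OF sr31, of 2 1] by (simp add: ent)
  have SR31_1_3: "n12 = 0 \<or> m01 = 0" using F[OF sr31, of 1 3] by (simp add: ent)
  have SR31_1_4: "n12 = 0 \<or> m02 = 0" using F[OF sr31, of 1 4] by (simp add: ent)
  have SR31_3_1: "m10 = 0 \<or> n21 = 0" using F[OF sr31, of 3 1] by (simp add: ent)
  have SR31_4_1: "m20 = 0 \<or> n21 = 0" using F[OF sr31, of 4 1] by (simp add: ent)
  have SR31_1_2: "n12 = 0 \<or> m00 = 1" using F[OF sr31, of 1 2] by (simp add: ent)
  have Rinv_0_0: "n00 * n00 + n01 * n10 + n02 * n20 = 1" using F[OF rinv, of 0 0] by (simp add: ent)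
  have Rinv_0_1: "n00 * n01 + n01 * n11 + n02 * n21 = 0" using F[OF rinv, of 0 1] by (simp add: ent)
  have Rinv_0_2: "n00 * n02 + n01 * n12 + n02 * n22 = 0" using F[OF rinv, of 0 2] by (simp add: ent)
  have Rinv_1_0: "n10 * n00 + n11 * n10 + n12 * n20 = 0" using F[OF rinv, of 1 0] by (simp add: ent)
  have Rinv_1_1: "n10 * n01 + n11 * n11 + n12 * n21 = 1" using F[OF rinv, of 1 1] by (simp add: ent)
  have Rinv_1_2: "n10 * n02 + n11 * n12 + n12 * n22 = 0" using F[OF rinv, of 1 2] by (simp add: ent)
  have Rinv_2_0: "n20 * n00 + n21 * n10 + n22 * n20 = 0" using F[OF rinv, of 2 0] by (simp add: ent)
  have Rinv_2_1: "n20 * n01 + n21 * n11 + n22 * n21 = 0" using F[OF rinv, of 2 1] by (simp add: ent)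
  have Rinv_2_2: "n20 * n02 + n21 * n12 + n22 * n22 = 1" using F[OF rinv, of 2 2] by (simp add: ent)
  have Sinv_0_0: "m00 * m00 + m01 * m10 + m02 * m20 = 1" using F[OF sinv, of 0 0] by (simp add: ent)
  have Sinv_0_1: "m00 * m01 + m01 * m11 + m02 * m21 = 0" using F[OF sinv, of 0 1] by (simp add: ent)
  have Sinv_0_2: "m00 * m02 + m01 * m12 + m02 * m22 = 0" using F[OF sinv, of 0 2] by (simp add: ent)
  have Sinv_1_0: "m10 * m00 + m11 * m10 + m12 * m20 = 0" using F[OF sinv, of 1 0] by (simp add: ent)
  have Sinv_1_1: "m10 * m01 + m11 * m11 + m12 * m21 = 1" using F[OF sinv, of 1 1] by (simp add: ent)
  have Sinv_1_2: "m10 * m02 + m11 * m12 + m12 * m22 = 0" using F[OF sinv, of 1 2] by (simp add: ent)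
  have Sinv_2_0: "m20 * m00 + m21 * m10 + m22 * m20 = 0" using F[OF sinv, of 2 0] by (simp add: ent)
  have Sinv_2_1: "m20 * m01 + m21 * m11 + m22 * m21 = 0" using F[OF sinv, of 2 1] by (simp add: ent)
  have Sinv_2_2: "m20 * m02 + m21 * m12 + m22 * m22 = 1" using F[OF sinv, of 2 2] by (simp add: ent)
  have braid_0_0: "n00 * n00 + n01 * (n00 * n10 + n01 * n20) + n02 * (n10 * n10 + n11 * n20) = n00" using F[OF braid, of 0 0] by (simp add: ent)
  have braid_0_1: "n01 * (n00 * n11 + n01 * n21) + n02 * (n10 * n11 + n11 * n21) = n02 * n10" using F[OF braid, of 0 1] by (simp add: ent)
  have braid_1_1: "n10 * n01 + n11 * (n00 * n11 + n01 * n21) + n12 * (n10 * n11 + n11 * n21) = n00 * (n11 * n00 + n12 * n10) + n01 * (n21 * n00 + n22 * n10) + n02 * n20" using F[OF braid, of 1 1] by (simp add: ent)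
  have braid_2_3: "n21 * n02 = n10 * (n11 * n02 + n12 * n12) + n11 * (n21 * n02 + n22 * n12)" using F[OF braid, of 2 3] by (simp add: ent)
  have braid_3_3: "n22 = n20 * (n11 * n02 + n12 * n12) + n21 * (n21 * n02 + n22 * n12) + n22 * n22" using F[OF braid, of 3 3] by (simp add: ent)
  have mixed_0_0: "n00 * m00 + n01 * (n00 * m10 + n01 * m20) + n02 * (n10 * m10 + n11 * m20) = n00" using F[OF mixed, of 0 0] by (simp add: ent)
  have mixed_0_1: "n00 * m01 + n01 * (n00 * m11 + n01 * m21) + n02 * (n10 * m11 + n11 * m21) = n01 * n00 + n02 * n10" using F[OF mixed, of 0 1] by (simp add: ent)
  have mixed_0_2: "n00 * m02 + n01 * (n00 * m12 + n01 * m22) + n02 * (n10 * m12 + n11 * m22) = n01 * n01 + n02 * n11" using F[OF mixed, of 0 2] by (simp add: ent)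
  have mixed_1_0: "n11 * (n00 * m10 + n01 * m20) + n12 * (n10 * m10 + n11 * m20) = m01 * n20" using F[OF mixed, of 1 0] by (simp add: ent)
  have mixed_1_1: "n10 * m01 + n11 * (n00 * m11 + n01 * m21) + n12 * (n10 * m11 + n11 * m21) = m00 * (n11 * n00 + n12 * n10) + m01 * (n21 * n00 + n22 * n10) + m02 * n20" using F[OF mixed, of 1 1] by (simp add: ent)
  have mixed_1_2: "n10 * m02 + n11 * (n00 * m12 + n01 * m22) + n12 * (n10 * m12 + n11 * m22) = m00 * (n11 * n01 + n12 * n11) + m01 * (n21 * n01 + n22 * n11) + m02 * n21" using F[OF mixed, of 1 2] by (simp add: ent)
  have mixed_1_3: "n11 * n02 + n12 * n12 = m00 * (n11 * n02 + n12 * n12) + m01 * (n21 * n02 + n22 * n12) + m02 * n22" using F[OF mixed, of 1 3] by (simp add: ent)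
  have mixed_2_0: "n20 * m00 + n21 * (n00 * m10 + n01 * m20) + n22 * (n10 * m10 + n11 * m20) = m10 * n10 + m11 * n20" using F[OF mixed, of 2 0] by (simp add: ent)
  have mixed_2_1: "n20 * m01 + n21 * (n00 * m11 + n01 * m21) + n22 * (n10 * m11 + n11 * m21) = m10 * (n11 * n00 + n12 * n10) + m11 * (n21 * n00 + n22 * n10) + m12 * n20" using F[OF mixed, of 2 1] by (simp add: ent)
  have mixed_2_2: "n20 * m02 + n21 * (n00 * m12 + n01 * m22) + n22 * (n10 * m12 + n11 * m22) = m10 * (n11 * n01 + n12 * n11) + m11 * (n21 * n01 + n22 * n11) + m12 * n21" using F[OF mixed, of 2 2] by (simp add: ent)
  have mixed_2_3: "n21 * n02 + n22 * n12 = m10 * (n11 * n02 + n12 * n12) + m11 * (n21 * n02 + n22 * n12) + m12 * n22" using F[OF mixed, of 2 3] by (simp add: ent)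
  have mixed_3_0: "n20 * m10 + n21 * m20 = m20 * n10 + m21 * n20" using F[OF mixed, of 3 0] by (simp add: ent)
  have mixed_3_1: "n20 * m11 + n21 * m21 = m20 * (n11 * n00 + n12 * n10) + m21 * (n21 * n00 + n22 * n10) + m22 * n20" using F[OF mixed, of 3 1] by (simp add: ent)
  have mixed_3_2: "n20 * m12 = m20 * (n11 * n01 + n12 * n11) + m21 * (n21 * n01 + n22 * n11)" using F[OF mixed, of 3 2] by (simp add: ent)
  have mixed_3_3: "n22 = m20 * (n11 * n02 + n12 * n12) + m21 * (n21 * n02 + n22 * n12) + m22 * n22" using F[OF mixed, of 3 3] by (simp add: ent)
  have welded_0_1: "n01 * (m00 * m11 + m01 * m21) + n02 * (m10 * m11 + m11 * m21) = m02 * n10" using F[OF welded, of 0 1] by (simp add: ent)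
  have welded_1_2: "n10 * m02 + n11 * (m00 * m12 + m01 * m22) + n12 * (m10 * m12 + m11 * m22) = m00 * (m11 * n01 + m12 * n11) + m01 * (m21 * n01 + m22 * n11) + m02 * n21" using F[OF welded, of 1 2] by (simp add: ent)
  have welded_2_2: "n20 * m02 + n21 * (m00 * m12 + m01 * m22) + n22 * (m10 * m12 + m11 * m22) = m10 * (m11 * n01 + m12 * n11) + m11 * (m21 * n01 + m22 * n11) + m12 * n21" using F[OF welded, of 2 2] by (simp add: ent)
  have welded_1_0: "n10 * m00 + n11 * (m00 * m10 + m01 * m20) + n12 * (m10 * m10 + m11 * m20) = m00 * m10 + m01 * m20" using F[OF welded, of 1 0] by (simp add: ent)
  have welded_1_1: "n10 * m01 + n11 * (m00 * m11 + m01 * m21) + n12 * (m10 * m11 + m11 * m21) = m00 * (m11 * n00 + m12 * n10) + m01 * (m21 * n00 + m22 * n10) + m02 * n20" using F[OF welded, of 1 1] by (simp add: ent)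
  have D: "M = N \<or>
     (n00 = 0 \<and> n11 = 0 \<and> n12 = 0 \<and> n21 = 0 \<and> n22 = 1 \<and> n01 * n10 = 1 \<and>
      m00 = 0 \<and> m02 = 0 \<and> m11 = 0 \<and> m12 = 0 \<and> m20 = 0 \<and> m21 = 0 \<and> m22 = 1 \<and> m01 * m10 = 1) \<or>
     (n00 = 1 \<and> n01 = 0 \<and> n10 = 0 \<and> n11 = 0 \<and> n22 = 0 \<and> n12 * n21 = 1 \<and>
      m00 = 1 \<and> m01 = 0 \<and> m02 = 0 \<and> m10 = 0 \<and> m11 = 0 \<and> m20 = 0 \<and> m22 = 0 \<and> m12 * m21 = 1)"
  proof (cases "n00 = 1")
    case False
    have n21: "n21 = 0" using R13_2_1 False by simp
    have n12: "n12 = 0" using R13_1_2 False by simp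
    show ?thesis
    proof (cases "n22 = 1")
      case False2: False
      have n01: "n01 = 0" using R13_2_3 False2 by simp
      have n10: "n10 = 0" using R13_3_2 False2 by simp
      have "n00 * n00 = 1" using Rinv_0_0 n01 n10 n02 n20 by simp
      moreover have "n00 * n00 = n00" using braid_0_0 n01 n10 n02 n20 by simp
      ultimately show ?thesis using False by simp
    next
      case n22: True
      have b00: "n00*n00 + n01*(n00*n10) = n00" using braid_0_0 n02 n20 by simp
      have i00: "n00*n00 + n01*n10 = 1" using Rinv_0_0 n02 n20 by simp
      have n01: "n01 \<noteq> 0"
      proof
        assume "n01 = 0"
        then have "n00*n00 = n00" "n00*n00 = 1" using b00 i00 by auto
        then show False using False by simp
      qed
      have i01: "n01 * (n00 + n11) = 0" using Rinv_0_1 n02 by (simp add: algebra_simps)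
      then have n11: "n11 = - n00" using n01 by (simp add: add_eq_0_iff)
      have b01: "n01*(n00*n11) = 0" using braid_0_1 n02 n21 by simp
      then have "n00 * n00 = 0" using n01 n11 by simp
      then have n00: "n00 = 0" by simp
      have n11': "n11 = 0" using n11 n00 by simp
      have nb: "n01 * n10 = 1" using i00 n00 by simp
      have m20: "m20 = 0" using SR13_2_0 False by simp
      have m21: "m21 = 0" using SR13_2_1 False by simp
      have m02: "m02 = 0" using SR13_0_3 n01 by simp
      have m12: "m12 = 0" using SR13_1_3 n01 by simp
      have m22: "m22 = 1" using SR13_2_3 n01 by simp
      have s00: "m00*m00 + m01*m10 = 1" using Sinv_0_0 m02 by simp
      have s11: "m10*m01 + m11*m11 = 1" using Sinv_1_1 m12 by simp
      have "n01*(m00*m11) = 0" using welded_0_1 m21 n02 m02 by simp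
      then have w: "m00*m11 = 0" using n01 by simp
      have sq: "m00*m00 = m11*m11" using s00 s11 by (metis add_left_cancel mult.commute add.commute)
      have "m00*m00*(m00*m00) = 0" using sq w by (metis mult.assoc mult.left_commute mult_zero_left)
      then have m00: "m00 = 0" by simp
      then have m11: "m11 = 0" using sq by simp
      have mb: "m01*m10 = 1" using s00 m00 by simp
      show ?thesis using n00 n11' n12 n21 n22 nb m00 m02 m11 m12 m20 m21 m22 mb by simp
    qed
  next
    case n00: True
    show ?thesis
    proof (cases "n22 = 1")
      case False
      have n01: "n01 = 0" using R13_2_3 False by simp
      have n10: "n10 = 0" using R13_3_2 False by simp
      have b33: "n22 = n21*(n22*n12) + n22*n22" using braid_3_3 n02 n20 by simp
      have i22: "n21*n12 + n22*n22 = 1" using Rinv_2_2 n02 n20 by simp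
      have n12: "n12 \<noteq> 0"
      proof
        assume "n12 = 0"
        then have "n22*n22 = n22" "n22*n22 = 1" using b33 i22 by auto
        then show False using False by simp
      qed
      have "n12 * (n11 + n22) = 0" using Rinv_1_2 n10 by (simp add: algebra_simps)
      then have n11: "n11 = - n22" using n12 by (simp add: add_eq_0_iff)
      have "n11*(n22*n12) = 0" using braid_2_3 n02 n10 by simp
      then have "n22 * n22 = 0" using n12 n11 by simp
      then have n22: "n22 = 0" by simp
      have n11': "n11 = 0" using n11 n22 by simp
      have nb: "n12 * n21 = 1" using i22 n22 by (simp add: mult.commute)
      then have n21: "n21 \<noteq> 0" by auto
      have m00: "m00 = 1" using SR31_2_1 n21 by simp
      have m01: "m01 = 0" using SR31_1_3 n12 by simp
      have m02: "m02 = 0" using SR31_1_4 n12 by simp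
      have m10: "m10 = 0" using SR31_3_1 n21 by simp
      have m20: "m20 = 0" using SR31_4_1 n21 by simp
      have s11: "m11*m11 + m12*m21 = 1" using Sinv_1_1 m10 by simp
      have s22: "m21*m12 + m22*m22 = 1" using Sinv_2_2 m20 by simp
      have "n12*(m11*m22) = 0" using welded_1_2 n10 n11' m10 m00 m01 m02 n01 by simp
      then have w: "m11*m22 = 0" using n12 by simp
      have sq: "m11*m11 = m22*m22" using s11 s22 by (metis add_left_cancel mult.commute add.commute)
      have "m11*m11*(m11*m11) = 0" using sq w by (metis mult.assoc mult.left_commute mult_zero_left)
      then have m11: "m11 = 0" by simp
      then have m22: "m22 = 0" using sq by simp
      have mb: "m12*m21 = 1" using s11 m11 by simp
      show ?thesis using n00 n01 n10 n11' n22 nb m00 m01 m02 m10 m11 m20 m22 mb by simp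
    next
      case n22: True
      have i00: "n01 * n10 = 0" using Rinv_0_0 n00 n02 by simp
      have i22: "n21 * n12 = 0" using Rinv_2_2 n22 n20 by simp
      have i11: "n11 * n11 = 1" using Rinv_1_1 i00 i22 mult.commute[of n12 n21] mult.commute[of n10 n01] by simp
      show ?thesis
      proof (cases "n11 = 1")
        case True
        have n01: "n01 = 0" using Rinv_0_1 True n00 n02 by simp
        have n10: "n10 = 0" using Rinv_1_0 True n00 n20 by simp
        have n12: "n12 = 0" using Rinv_1_2 True n22 n02 by simp
        have n21: "n21 = 0" using Rinv_2_1 True n22 n20 by simp
        note NI = n00 n01 n02 n10 True n12 n20 n21 n22
        have "m00 = 1" using mixed_0_0 NI by simp
        moreover have "m01 = 0" using mixed_0_1 NI by simp
        moreover have "m02 = 0" using mixed_0_2 NI by simp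
        moreover have "m10 = 0" using mixed_1_0 NI by simp
        moreover have "m20 = 0" using mixed_2_0 NI by simp
        moreover have "m11 = m00" using mixed_1_1 NI by simp
        moreover have "m12 = 0" using mixed_2_3 NI by simp
        moreover have "m21 = 0" using mixed_3_2 NI by simp
        moreover have "m22 = m11" using mixed_2_2 NI by simp
        ultimately show ?thesis using NI by (simp add: MM NN)
      next
        case False
        have n11: "n11 = -1" using i11 False by (metis mult_cancel_left1 square_eq_1_iff)
        show ?thesis
        proof (cases "n01 = 0")
          case False
          have n12: "n12 = 0" using R13_1_3 False by simp
          have n10: "n10 = 0" using i00 False by simp
          have "1 - n01*n21 = -1 + n01*n21" using braid_1_1 n00 n11 n22 n02 n20 n10 n12 by simp
          then have nb: "n01*n21 = 1" by (simp add: algebra_simps)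
          then have n21: "n21 \<noteq> 0" by auto
          have m02: "m02 = 0" using SR13_0_3 False by simp
          have m12: "m12 = 0" using SR13_1_3 False by simp
          have m22: "m22 = 1" using SR13_2_3 False by simp
          have m00: "m00 = 1" using SR31_2_1 n21 by simp
          have m10: "m10 = 0" using SR31_3_1 n21 by simp
          have m20: "m20 = 0" using SR31_4_1 n21 by simp
          have s11: "m11*m11 = 1" using Sinv_1_1 m10 m12 by simp
          have s01: "m01*(1+m11) = 0" using Sinv_0_1 m00 m02 by (simp add: algebra_simps)
          have s21: "m21*(1+m11) = 0" using Sinv_2_1 m20 m22 by (simp add: algebra_simps)
          show ?thesis
          proof (cases "m11 = 1")
            case True
            then have "m01 = 0" "m21 = 0" using s01 s21 by auto
            then have "n01 = 0" using welded_0_1 True m00 n02 m02 by simp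
            then show ?thesis using False by simp
          next
            case m11f: False
            have m11: "m11 = -1" using s11 m11f by (metis mult_cancel_left1 square_eq_1_iff)
            have "n01*(-1 + m01*m21) = 0" using welded_0_1 m11 m00 n02 m02 by simp
            then have mb: "m01*m21 = 1" using False by simp
            have w22: "n21*m01 - 1 = 1 - m21*n01"
              using welded_2_2 n20 m00 m12 m22 n22 m10 m11 n11 by (simp add: algebra_simps)
            have "(m01 - n01)*(m01 - n01) = 0"
            proof -
              have "(m01 - n01)*(m01 - n01) = m01*n01*((n21*m01 - 1) - (1 - m21*n01))
                  + m01*m01*(1 - n01*n21) + n01*n01*(1 - m01*m21)"
                by (simp add: algebra_simps)
              then show ?thesis using w22 nb mb by simp
            qed
            then have e01: "m01 = n01" by simp
            then have e21: "m21 = n21" using nb mb False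
              by (metis mult_cancel_left)
            show ?thesis using e01 e21 m00 m02 m10 m11 m12 m20 m22 n00 n02 n10 n11 n12 n20 n22
              by (simp add: MM NN)
          qed
        next
          case n01: True
          show ?thesis
          proof (cases "n10 = 0")
            case True
            have "1 - n12*n21 = -1" using braid_1_1 n00 n11 n22 n02 n20 True n01 by (simp add: algebra_simps)
            then show ?thesis using i22 by (simp add: mult.commute)
          next
            case False
            have n21: "n21 = 0" using R13_3_1 False by simp
            have "1 - n12*n10 = -1 + n12*n10" using braid_1_1 n00 n11 n22 n02 n20 n21 n01 by (simp add: algebra_simps)
            then have nb: "n10*n12 = 1" by (simp add: algebra_simps)
            then have n12: "n12 \<noteq> 0" by auto
            have m20: "m20 = 0" using SR13_3_0 False by simp
            have m21: "m21 = 0" using SR13_3_1 False by simp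
            have m22: "m22 = 1" using SR13_3_2 False by simp
            have m00: "m00 = 1" using SR31_1_2 n12 by simp
            have m01: "m01 = 0" using SR31_1_3 n12 by simp
            have m02: "m02 = 0" using SR31_1_4 n12 by simp
            have s11: "m11*m11 = 1" using Sinv_1_1 m01 m21 by simp
            have s10: "m10*(1+m11) = 0" using Sinv_1_0 m00 m20 by (simp add: algebra_simps)
            have s12: "m12*(1+m11) = 0" using Sinv_1_2 m02 m22 by (simp add: algebra_simps)
            show ?thesis
            proof (cases "m11 = 1")
              case True
              then have "m10 = 0" "m12 = 0" using s10 s12 by auto
              then have "n10 = 0" using welded_1_0 True m00 m20 m01 by simp
              then show ?thesis using False by simp
            next
              case m11f: False
              have m11: "m11 = -1" using s11 m11f by (metis mult_cancel_left1 square_eq_1_iff)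
              have w10: "n10 - 2*m10 + n12*(m10*m10) = 0"
                using welded_1_0 m11 m00 m20 m01 n11 by (simp add: algebra_simps)
              have w11: "1 - n12*m10 = -1 + m12*n10"
                using welded_1_1 m11 m00 m01 m02 n11 n00 m21 n20 by (simp add: algebra_simps)
              have "(1 - n12*m10)*(1 - n12*m10) = 0"
              proof -
                have "(1 - n12*m10)*(1 - n12*m10) = n12*(n10 - 2*m10 + n12*(m10*m10)) + (1 - n10*n12)"
                  by (simp add: algebra_simps)
                then show ?thesis using w10 nb by simp
              qed
              then have "n12*m10 = 1" by simp
              then have e10: "m10 = n10" using nb n12 by (metis mult.commute mult_cancel_left)
              have "m12*n10 = 1" using w11 \<open>n12*m10 = 1\<close> by (simp add: algebra_simps)
              then have e12: "m12 = n12" using nb False by (metis mult.commute mult_cancel_left)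
              show ?thesis using e10 e12 m00 m01 m02 m11 m20 m21 m22 n00 n01 n02 n11 n20 n21 n22
                by (simp add: MM NN)
            qed
          qed
        qed
      qed
    qed
  qed
  from D consider (eq) "M = N"
    | (f2) "n00 = 0" "n11 = 0" "n12 = 0" "n21 = 0" "n22 = 1" "n01 * n10 = 1"
      "m00 = 0" "m02 = 0" "m11 = 0" "m12 = 0" "m20 = 0" "m21 = 0" "m22 = 1" "m01 * m10 = 1"
    | (f3) "n00 = 1" "n01 = 0" "n10 = 0" "n11 = 0" "n22 = 0" "n12 * n21 = 1"
      "m00 = 1" "m01 = 0" "m02 = 0" "m10 = 0" "m11 = 0" "m20 = 0" "m22 = 0" "m12 * m21 = 1"
    by blast
  then show ?thesis
  proof cases
    case eq
    have w1: "wt_eq 4 [S 1, S 1, S 2, S 2] []"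
    proof -
      have "wt_eq 4 ([] @ [S 1, S 1] @ [S 2, S 2]) ([] @ [] @ [S 2, S 2])"
        by (rule wt_eq.rel) (rule wt_rel.s_inv, auto)
      moreover have "wt_eq 4 ([] @ [S 2, S 2] @ []) ([] @ [] @ [])"
        by (rule wt_eq.rel) (rule wt_rel.s_inv, auto)
      ultimately show ?thesis by (auto intro: wt_eq.trans)
    qed
    have w2: "wt_eq 4 [S 2, S 1, S 1, S 2] []"
    proof -
      have "wt_eq 4 ([S 2] @ [S 1, S 1] @ [S 2]) ([S 2] @ [] @ [S 2])"
        by (rule wt_eq.rel) (rule wt_rel.s_inv, auto)
      moreover have "wt_eq 4 ([] @ [S 2, S 2] @ []) ([] @ [] @ [])"
        by (rule wt_eq.rel) (rule wt_rel.s_inv, auto)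
      ultimately show ?thesis by (auto intro: wt_eq.trans)
    qed
    have "word_mat 4 M N [S 1, R 1, S 2, R 2] = word_mat 4 M N [S 1, S 1, S 2, S 2]"
      by (simp add: word_mat_def gen_mat_def eq)
    also have "\<dots> = word_mat 4 M N []" by (rule resp[OF rel w1])
    also have "\<dots> = word_mat 4 M N [S 2, S 1, S 1, S 2]" by (rule resp[OF rel w2, symmetric])
    also have "\<dots> = word_mat 4 M N [R 2, S 1, R 1, R 2]"
      by (simp add: word_mat_def gen_mat_def eq)
    finally show ?thesis .
  next
    case f2
    show ?thesis unfolding MM NN
    proof (rule eq_matI)
      fix i j assume "i < dim_row (word_mat 4 (mat3 m00 m01 m02 m10 m11 m12 m20 m21 m22) (mat3 n00 n01 n02 n10 n11 n12 n20 n21 n22) [R 2, S 1, R 1, R 2])"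
        "j < dim_col (word_mat 4 (mat3 m00 m01 m02 m10 m11 m12 m20 m21 m22) (mat3 n00 n01 n02 n10 n11 n12 n20 n21 n22) [R 2, S 1, R 1, R 2])"
      then have "i < 5" "j < 5" by auto
      then show "word_mat 4 (mat3 m00 m01 m02 m10 m11 m12 m20 m21 m22) (mat3 n00 n01 n02 n10 n11 n12 n20 n21 n22) [S 1, R 1, S 2, R 2] $$ (i, j) =
        word_mat 4 (mat3 m00 m01 m02 m10 m11 m12 m20 m21 m22) (mat3 n00 n01 n02 n10 n11 n12 n20 n21 n22) [R 2, S 1, R 1, R 2] $$ (i, j)"
        using less5 f2 n02 n20 mult.commute[of n10 n01] mult.commute[of m10 m01] by (auto simp: ent)
    qed (use word_mat_carrier[of 4] in auto)
  next
    case f3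
    show ?thesis unfolding MM NN
    proof (rule eq_matI)
      fix i j assume "i < dim_row (word_mat 4 (mat3 m00 m01 m02 m10 m11 m12 m20 m21 m22) (mat3 n00 n01 n02 n10 n11 n12 n20 n21 n22) [R 2, S 1, R 1, R 2])"
        "j < dim_col (word_mat 4 (mat3 m00 m01 m02 m10 m11 m12 m20 m21 m22) (mat3 n00 n01 n02 n10 n11 n12 n20 n21 n22) [R 2, S 1, R 1, R 2])"
      then have "i < 5" "j < 5" by auto
      then show "word_mat 4 (mat3 m00 m01 m02 m10 m11 m12 m20 m21 m22) (mat3 n00 n01 n02 n10 n11 n12 n20 n21 n22) [S 1, R 1, S 2, R 2] $$ (i, j) =
        word_mat 4 (mat3 m00 m01 m02 m10 m11 m12 m20 m21 m22) (mat3 n00 n01 n02 n10 n11 n12 n20 n21 n22) [R 2, S 1, R 1, R 2] $$ (i, j)"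
        using less5 f3 n02 n20 mult.commute[of n21 n12] mult.commute[of m21 m12] by (auto simp: ent)
    qed (use word_mat_carrier[of 4] in auto)
  qed
qed


theorem theorem4p6:
  fixes n :: nat and M N :: "complex mat"
  assumes "n \<ge> 4"
    and "is_hom_3local_rep n M N"
  shows "unfaithful n M N"
proof -
  have cM: "M \<in> carrier_mat 3 3" and cN: "N \<in> carrier_mat 3 3"
    and rep: "\<And>a b. wt_rel n a b \<Longrightarrow> word_mat n M N a = word_mat n M N b"
    using assms(2) unfolding is_hom_3local_rep_def by auto
  have r4: "\<And>a b. wt_rel 4 a b \<Longrightarrow> word_mat 4 M N a = word_mat 4 M N b"
    using rel4[OF assms(1) rep] by blast
  have eq4: "word_mat 4 M N [S 1, R 1, S 2, R 2] = word_mat 4 M N [R 2, S 1, R 1, R 2]"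
    by (rule core[OF r4 mat3_eq[OF cM] mat3_eq[OF cN]])
  have i1: "idx_ok [S 1, R 1, S 2, R 2]" and i2: "idx_ok [R 2, S 1, R 1, R 2]"
    by (auto simp: idx_ok_def gen_idx_def)
  have eqn: "word_mat n M N [S 1, R 1, S 2, R 2] = word_mat n M N [R 2, S 1, R 1, R 2]"
    using word_emb[OF assms(1) i1] word_emb[OF assms(1) i2] eq4 by simp
  have ne: "\<not> wt_eq n [S 1, R 1, S 2, R 2] [R 2, S 1, R 1, R 2]"
  proof
    assume "wt_eq n [S 1, R 1, S 2, R 2] [R 2, S 1, R 1, R 2]"
    from eq_par[OF this] show False by (simp add: cntS_def)
  qed
  have v1: "valid_word n [S 1, R 1, S 2, R 2]" and v2: "valid_word n [R 2, S 1, R 1, R 2]"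
    using assms(1) by (auto simp: valid_word_def gen_idx_def)
  show ?thesis unfolding unfaithful_def using v1 v2 ne eqn by blast
qed

end
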